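(* (Equivalence theorem for bounded approximate designs.) Let $\nu_1,\ldots,\nu_N$ and $\mu_1,\ldots,\mu_N$ be real numbers with $0\le \nu_i<\mu_i$ for all $i$, $\sum_{i=1}^N\nu_i\le 1$ and $\sum_{i=1}^N\mu_i\ge 1$. Let $\Xi$ be the set of all designs $\xi=\{(\boldsymbol{x}_i,w_i): i=1,\ldots,N\}$ with $\nu_i\le w_i\le\mu_i$ for all $i$ and $\sum_{i=1}^N w_i=1$. Let $\Phi\in\Lambda$ and let $\xi^*=\{(\boldsymbol{x}_i,w_i)\}\in\Xi$ with $\Phi(\xi^* )<\infty$. Then the following are equivalent: (I) $\xi^*$ is $\Phi$-optimal in $\Xi$, i.e. $\Phi(\xi^* )=\min_{\xi\in\Xi}\Phi(\xi)$. (II) There is a partition $\mathcal{X}=\mathcal{X}_1\cup\mathcal{X}_2\cup\mathcal{X}_3$ of the point set $\mathcal{X}=\{\boldsymbol{x}_1,\ldots,\boldsymbol{x}_N\}$ such that (a) $w_i=\nu_i$ for $\boldsymbol{x}_i\in\mathcal{X}_1$ and $w_i=\mu_i$ for $\boldsymbol{x}_i\in\mathcal{X}_3$; (b) if $\mathcal{X}_2=\emptyset$, then $\max_{\boldsymbol{x}_i\in\mathcal{X}_3}F_\Phi(\xi^*;\boldsymbol{x}_i)\le\min_{\boldsymbol{x}_i\in\mathcal{X}_1}F_\Phi(\xi^*;\boldsymbol{x}_i)$; (c) if $\mathcal{X}_2\neq\emptyset$, then there is a real number $s$ such that for every $\boldsymbol{x}_i\in\mathcal{X}_2$: (i) $\nu_i<w_i<\mu_i$;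 (ii) $F_\Phi(\xi^*;\boldsymbol{x}_i)=s$; and (iii) $\max_{\boldsymbol{x}_j\in\mathcal{X}_3}F_\Phi(\xi^*;\boldsymbol{x}_j)\le s\le\min_{\boldsymbol{x}_j\in\mathcal{X}_1}F_\Phi(\xi^*;\boldsymbol{x}_j)$. (Here a maximum over the empty set is $-\infty$ and a minimum over the empty set is $+\infty$.)
   Context: Setting: $N$ points $\boldsymbol{x}_1,\ldots,\boldsymbol{x}_N$ (treated as distinct by index) forming the design space $\mathcal{X}$, each with a symmetric positive semidefinite $p_1\times p_1$ information matrix $I_{\boldsymbol\theta}(\boldsymbol{x}_i)$. An (approximate) design is $\xi=\{(\boldsymbol{x}_i,w_i)\}$ with $w_i\ge0$, $\sum_i w_i=1$; its information matrix is $M(\xi)=\sum_i w_i I_{\boldsymbol\theta}(\boldsymbol{x}_i)$, and a criterion $\Phi$ is a function of $M(\xi)$ (taking value $+\infty$ when undefined, e.g. at singular $M$), written $\Phi(\xi)$; designs are added/scaled through their weight vectors. Directional derivative: $F_\Phi(\xi,\eta)=\lim_{\alpha\downarrow0}\frac{\Phi((1-\alpha)\xi+\alpha\eta)-\Phi(\xi)}{\alpha}$, and $F_\Phi(\xi;\boldsymbol{x}_i)=F_\Phi(\xi,\delta_{\boldsymbol{x}_i})$ where $\delta_{\boldsymbol{x}_i}$ is the design putting weight 1 on $\boldsymbol{x}_i$. The class $\Lambda$ consists of criteria $\Phi$ that are convex (as functions of the weight vector) and linearly differentiable, meaning that at every design $\xi$ with $\Phi(\xi)<\infty$ and every design $\eta=\{(\boldsymbol{x}_i,\lambda_i)\}$,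 $F_\Phi(\xi,\eta)$ exists and equals $\sum_i\lambda_iF_\Phi(\xi;\boldsymbol{x}_i)$; moreover for designs $\xi_1,\xi_2,\xi_3$, $\gamma\mapsto\Phi(\xi_1+\gamma(\xi_2-\xi_3))$ is infinitely differentiable on the set of $\gamma>0$ for which this is a design. Examples: $D$-optimality $\Phi=\log\det(M^{-1})$, $A$-optimality $\Phi=\mathrm{Tr}(M^{-1})$. *)

theory Defs
  imports "HOL-Analysis.Analysis" "HOL-Library.Extended_Real"
begin

text \<open>Design points are indexed by i < N; a design is its weight vector
  (weights outside the index range are 0).\<close>

definition is_design :: "nat \<Rightarrow> (nat \<Rightarrow> real) \<Rightarrow> bool" where
  "is_design N w \<longleftrightarrow> (\<forall>i<N. 0 \<le> w i) \<and> (\<forall>i\<ge>N. w i = 0) \<and> (\<Sum>i<N. w i) = 1"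

definition dirac :: "nat \<Rightarrow> nat \<Rightarrow> real" where
  "dirac i = (\<lambda>j. if j = i then 1 else 0)"

definition info_mat :: "(nat \<Rightarrow> real^'p^'p) \<Rightarrow> nat \<Rightarrow> (nat \<Rightarrow> real) \<Rightarrow> real^'p^'p" where
  "info_mat I N w = (\<Sum>i<N. w i *\<^sub>R I i)"

definition crit :: "(real^'p^'p \<Rightarrow> ereal) \<Rightarrow> (nat \<Rightarrow> real^'p^'p) \<Rightarrow> nat \<Rightarrow> (nat \<Rightarrow> real) \<Rightarrow> ereal" where
  "crit Phi I N w = Phi (info_mat I N w)"

definition dquot :: "(real^'p^'p \<Rightarrow> ereal) \<Rightarrow> (nat \<Rightarrow> real^'p^'p) \<Rightarrow> nat
    \<Rightarrow> (nat \<Rightarrow> real) \<Rightarrow> (nat \<Rightarrow> real) \<Rightarrow> real \<Rightarrow> ereal" where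
  "dquot Phi I N xi eta \<alpha> =
     (crit Phi I N (\<lambda>i. (1 - \<alpha>) * xi i + \<alpha> * eta i) - crit Phi I N xi) / ereal \<alpha>"

text \<open>Directional derivative F_Phi(xi, eta) (real-valued, meaningful when the limit exists
  as a real number).\<close>
definition dir_deriv :: "(real^'p^'p \<Rightarrow> ereal) \<Rightarrow> (nat \<Rightarrow> real^'p^'p) \<Rightarrow> nat
    \<Rightarrow> (nat \<Rightarrow> real) \<Rightarrow> (nat \<Rightarrow> real) \<Rightarrow> real" where
  "dir_deriv Phi I N xi eta = real_of_ereal (Lim (at_right 0) (dquot Phi I N xi eta))"

definition convex_crit :: "(real^'p^'p \<Rightarrow> ereal) \<Rightarrow> (nat \<Rightarrow> real^'p^'p) \<Rightarrow> nat \<Rightarrow> bool" where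
  "convex_crit Phi I N \<longleftrightarrow>
     (\<forall>w1 w2 t. is_design N w1 \<longrightarrow> is_design N w2 \<longrightarrow> 0 < t \<longrightarrow> t < 1 \<longrightarrow>
        crit Phi I N (\<lambda>i. t * w1 i + (1 - t) * w2 i)
          \<le> ereal t * crit Phi I N w1 + ereal (1 - t) * crit Phi I N w2)"

definition linearly_differentiable :: "(real^'p^'p \<Rightarrow> ereal) \<Rightarrow> (nat \<Rightarrow> real^'p^'p) \<Rightarrow> nat \<Rightarrow> bool" where
  "linearly_differentiable Phi I N \<longleftrightarrow>
     (\<forall>xi eta. is_design N xi \<longrightarrow> crit Phi I N xi < \<infinity> \<longrightarrow> is_design N eta \<longrightarrow>
        (\<exists>L::real. (dquot Phi I N xi eta \<longlongrightarrow> ereal L) (at_right 0)) \<and>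
        dir_deriv Phi I N xi eta = (\<Sum>i<N. eta i * dir_deriv Phi I N xi (dirac i)))"

definition smooth_along_lines :: "(real^'p^'p \<Rightarrow> ereal) \<Rightarrow> (nat \<Rightarrow> real^'p^'p) \<Rightarrow> nat \<Rightarrow> bool" where
  "smooth_along_lines Phi I N \<longleftrightarrow>
     (\<forall>xi1 xi2 xi3. is_design N xi1 \<longrightarrow> is_design N xi2 \<longrightarrow> is_design N xi3 \<longrightarrow>
       (let g = (\<lambda>\<gamma>. crit Phi I N (\<lambda>i. xi1 i + \<gamma> * (xi2 i - xi3 i)));
            S = {\<gamma>. 0 < \<gamma> \<and> is_design N (\<lambda>i. xi1 i + \<gamma> * (xi2 i - xi3 i)) \<and> g \<gamma> < \<infinity>}
        in \<exists>f :: nat \<Rightarrow> real \<Rightarrow> real. \<forall>\<gamma>\<in>S. f 0 \<gamma> = real_of_ereal (g \<gamma>) \<and>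
             (\<forall>k. (f k has_real_derivative f (Suc k) \<gamma>) (at \<gamma> within S))))"

definition in_Lambda :: "(real^'p^'p \<Rightarrow> ereal) \<Rightarrow> (nat \<Rightarrow> real^'p^'p) \<Rightarrow> nat \<Rightarrow> bool" where
  "in_Lambda Phi I N \<longleftrightarrow> (\<forall>M. Phi M \<noteq> -\<infinity>) \<and> convex_crit Phi I N \<and>
     linearly_differentiable Phi I N \<and> smooth_along_lines Phi I N"

definition bounded_designs :: "nat \<Rightarrow> (nat \<Rightarrow> real) \<Rightarrow> (nat \<Rightarrow> real) \<Rightarrow> (nat \<Rightarrow> real) set" where
  "bounded_designs N \<nu> \<mu> = {w. is_design N w \<and> (\<forall>i<N. \<nu> i \<le> w i \<and> w i \<le> \<mu> i)}"

end

theory Submission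
  imports Defs
begin


lemma ev01: "\<forall>\<^sub>F a in at_right (0::real). 0 < a \<and> a < 1"
  unfolding eventually_at_right_field by (rule exI[of _ 1]) auto

lemma deriv_lim:
  assumes "in_Lambda Phi I N" "is_design N w" "crit Phi I N w < \<infinity>" "is_design N eta"
  obtains L where "(dquot Phi I N w eta \<longlongrightarrow> ereal L) (at_right 0)"
    "dir_deriv Phi I N w eta = L"
    "L = (\<Sum>i<N. eta i * dir_deriv Phi I N w (dirac i))"
proof -
  from assms have ld: "linearly_differentiable Phi I N" by (simp add: in_Lambda_def)
  then obtain L where L: "(dquot Phi I N w eta \<longlongrightarrow> ereal L) (at_right 0)"
    using assms unfolding linearly_differentiable_def by blast
  have "dir_deriv Phi I N w eta = L"
    unfolding dir_deriv_def using tendsto_Lim[OF _ L] by simp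
  moreover have "dir_deriv Phi I N w eta = (\<Sum>i<N. eta i * dir_deriv Phi I N w (dirac i))"
    using ld assms unfolding linearly_differentiable_def by blast
  ultimately show ?thesis using that L by auto
qed

lemma crit_real:
  assumes "in_Lambda Phi I N" "crit Phi I N w < \<infinity>"
  shows "crit Phi I N w = ereal (real_of_ereal (crit Phi I N w))"
proof -
  have "crit Phi I N w \<noteq> -\<infinity>" using assms(1) unfolding in_Lambda_def crit_def by blast
  then show ?thesis using assms(2) by (cases "crit Phi I N w") auto
qed

lemma sum_wD:
  assumes "in_Lambda Phi I N" "is_design N w" "crit Phi I N w < \<infinity>"
  shows "(\<Sum>i<N. w i * dir_deriv Phi I N w (dirac i)) = 0"
proof -
  obtain L where L: "(dquot Phi I N w w \<longlongrightarrow> ereal L) (at_right 0)"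
    "L = (\<Sum>i<N. w i * dir_deriv Phi I N w (dirac i))"
    using deriv_lim[OF assms assms(2)] by metis
  have "dquot Phi I N w w a = 0" for a
  proof -
    have "(\<lambda>i. (1 - a) * w i + a * w i) = w" by (auto simp: algebra_simps)
    moreover obtain c where "crit Phi I N w = ereal c" using crit_real[OF assms(1,3)] by blast
    ultimately show ?thesis unfolding dquot_def by (simp add: zero_ereal_def)
  qed
  then have "dquot Phi I N w w = (\<lambda>_. 0)" by (rule ext)
  then have "(dquot Phi I N w w \<longlongrightarrow> 0) (at_right 0)" by simp
  with L(1) have "ereal L = 0" using tendsto_unique[OF trivial_limit_at_right_real] by blast
  with L(2) show ?thesis by simp
qed

lemma sum_dirac: "b < N \<Longrightarrow> (\<Sum>k<N. dirac b k * D k) = (D b :: real)"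
proof -
  assume b: "b < N"
  have "(\<Sum>k<N. dirac b k * D k) = (\<Sum>k<N. if b = k then D k else 0)"
    by (rule sum.cong) (auto simp: dirac_def)
  also have "\<dots> = D b" using b by (simp add: sum.delta)
  finally show ?thesis .
qed

lemma dirac_design: "b < N \<Longrightarrow> is_design N (dirac b)"
  unfolding is_design_def dirac_def by auto



lemma shift_design:
  assumes bounds: "\<forall>i<N. 0 \<le> \<nu> i \<and> \<nu> i < \<mu> i"
    and w_in: "w \<in> bounded_designs N \<nu> \<mu>"
    and ab: "a < N" "b < N" "a \<noteq> b" and t: "0 < t" "t \<le> w a - \<nu> a" "t \<le> \<mu> b - w b"
  shows "(\<lambda>k. w k + t * (dirac b k - dirac a k)) \<in> bounded_designs N \<nu> \<mu>"
proof -
  have wd: "is_design N w" "\<forall>i<N. \<nu> i \<le> w i \<and> w i \<le> \<mu> i" using w_in by (auto simp: bounded_designs_def)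
  have s: "(\<Sum>k<N. w k + t * (dirac b k - dirac a k)) = (\<Sum>k<N. w k) + t * ((\<Sum>k<N. dirac b k * 1) - (\<Sum>k<N. dirac a k * 1))"
    by (simp add: sum.distrib sum_subtractf sum_distrib_left algebra_simps)
  also have "\<dots> = 1" using ab wd(1) by (simp only: sum_dirac) (simp add: is_design_def)
  finally have s1: "(\<Sum>k<N. w k + t * (dirac b k - dirac a k)) = 1" .
  show ?thesis unfolding bounded_designs_def is_design_def
  proof (intro CollectI conjI allI impI)
    fix i assume "i < N"
    then show "\<nu> i \<le> w i + t * (dirac b i - dirac a i)" "w i + t * (dirac b i - dirac a i) \<le> \<mu> i"
      "0 \<le> w i + t * (dirac b i - dirac a i)"
      using wd(2) bounds t ab by (auto simp: dirac_def) (smt (verit))+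
  next
    fix i assume "N \<le> i" then show "w i + t * (dirac b i - dirac a i) = 0"
      using wd(1) ab by (auto simp: dirac_def is_design_def)
  qed (rule s1)
qed

lemma opt_pair:
  assumes bounds: "\<forall>i<N. 0 \<le> \<nu> i \<and> \<nu> i < \<mu> i"
    and Lam: "in_Lambda Phi I N"
    and w_in: "w \<in> bounded_designs N \<nu> \<mu>"
    and fin: "crit Phi I N w < \<infinity>"
    and opt: "\<forall>\<xi>\<in>bounded_designs N \<nu> \<mu>. crit Phi I N w \<le> crit Phi I N \<xi>"
    and ab: "a < N" "b < N" "a \<noteq> b" "\<nu> a < w a" "w b < \<mu> b"
  shows "dir_deriv Phi I N w (dirac a) \<le> dir_deriv Phi I N w (dirac b)"
proof -
  define D where "D k = dir_deriv Phi I N w (dirac k)" for k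
  define t where "t = min (w a - \<nu> a) (\<mu> b - w b)"
  have t: "0 < t" "t \<le> w a - \<nu> a" "t \<le> \<mu> b - w b" using ab by (auto simp: t_def)
  define eta where "eta = (\<lambda>k. w k + t * (dirac b k - dirac a k))"
  have eta: "eta \<in> bounded_designs N \<nu> \<mu>" unfolding eta_def by (rule shift_design[OF bounds w_in ab(1-3) t])
  have wd: "is_design N w" using w_in by (simp add: bounded_designs_def)
  have ed: "is_design N eta" using eta by (simp add: bounded_designs_def)
  obtain c where c: "crit Phi I N w = ereal c" using crit_real[OF Lam fin] by blast
  have ninf: "crit Phi I N v \<noteq> -\<infinity>" for v using Lam unfolding in_Lambda_def crit_def by blast
  obtain L where L: "(dquot Phi I N w eta \<longlongrightarrow> ereal L) (at_right 0)"
    "L = (\<Sum>i<N. eta i * D i)"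
    using deriv_lim[OF Lam wd fin ed] unfolding D_def by metis
  have ev: "\<forall>\<^sub>F x in at_right 0. 0 \<le> dquot Phi I N w eta x"
    using ev01
  proof (rule eventually_mono)
    fix x :: real assume x: "0 < x \<and> x < 1"
    have "(\<lambda>i. (1 - x) * w i + x * eta i) = (\<lambda>k. w k + (x * t) * (dirac b k - dirac a k))"
      by (auto simp: eta_def algebra_simps)
    moreover have "(\<lambda>k. w k + (x * t) * (dirac b k - dirac a k)) \<in> bounded_designs N \<nu> \<mu>"
      apply (rule shift_design[OF bounds w_in ab(1-3)])
      using x t by (auto simp: mult_le_cancel_right1 intro: order.trans[rotated])
    ultimately have le: "ereal c \<le> crit Phi I N (\<lambda>i. (1 - x) * w i + x * eta i)"
      using opt c by auto
    show "0 \<le> dquot Phi I N w eta x" unfolding dquot_def c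
      using le x ninf[of "\<lambda>i. (1 - x) * w i + x * eta i"]
      by (cases "crit Phi I N (\<lambda>i. (1 - x) * w i + x * eta i)") (auto simp: ereal_divide)
  qed
  have "0 \<le> ereal L"
    by (rule tendsto_lowerbound[OF L(1) ev trivial_limit_at_right_real])
  then have L0: "0 \<le> L" by simp
  have "L = (\<Sum>i<N. w i * D i) + t * ((\<Sum>k<N. dirac b k * D k) - (\<Sum>k<N. dirac a k * D k))"
    unfolding L(2) eta_def by (simp add: sum.distrib sum_subtractf sum_distrib_left algebra_simps)
  also have "\<dots> = t * (D b - D a)"
    using sum_wD[OF Lam wd fin] ab by (simp add: sum_dirac D_def)
  finally show ?thesis using L0 t unfolding D_def by (simp add: zero_le_mult_iff)
qed



lemma suff:
  assumes Lam: "in_Lambda Phi I N"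
    and w_in: "w \<in> bounded_designs N \<nu> \<mu>"
    and fin: "crit Phi I N w < \<infinity>"
    and xi: "xi \<in> bounded_designs N \<nu> \<mu>"
    and hs: "\<forall>k<N. (xi k - w k) * s \<le> (xi k - w k) * dir_deriv Phi I N w (dirac k)"
  shows "crit Phi I N w \<le> crit Phi I N xi"
proof (cases "crit Phi I N xi = \<infinity>")
  case True then show ?thesis by simp
next
  case False
  define D where "D k = dir_deriv Phi I N w (dirac k)" for k
  have wd: "is_design N w" using w_in by (simp add: bounded_designs_def)
  have xd: "is_design N xi" using xi by (simp add: bounded_designs_def)
  obtain c where c: "crit Phi I N w = ereal c" using crit_real[OF Lam fin] by blast
  have ninf: "crit Phi I N v \<noteq> -\<infinity>" for v using Lam unfolding in_Lambda_def crit_def by blast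
  obtain c' where c': "crit Phi I N xi = ereal c'" using False ninf[of xi] by (cases "crit Phi I N xi") auto
  obtain L where L: "(dquot Phi I N w xi \<longlongrightarrow> ereal L) (at_right 0)"
    "L = (\<Sum>i<N. xi i * D i)"
    using deriv_lim[OF Lam wd fin xd] unfolding D_def by metis
  have "(\<Sum>i<N. (xi i - w i) * s) \<le> (\<Sum>i<N. (xi i - w i) * D i)"
    by (rule sum_mono) (use hs D_def in auto)
  moreover have "(\<Sum>i<N. (xi i - w i) * s) = 0"
    using wd xd by (simp add: sum_distrib_right[symmetric] sum_subtractf is_design_def)
  moreover have "(\<Sum>i<N. (xi i - w i) * D i) = L"
    using sum_wD[OF Lam wd fin] L(2) unfolding D_def by (simp add: algebra_simps sum_subtractf)
  ultimately have L0: "0 \<le> L" by simp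
  have cc: "convex_crit Phi I N" using Lam by (simp add: in_Lambda_def)
  have ev: "\<forall>\<^sub>F x in at_right 0. dquot Phi I N w xi x \<le> ereal (c' - c)"
    using ev01
  proof (rule eventually_mono)
    fix x :: real assume x: "0 < x \<and> x < 1"
    have "crit Phi I N (\<lambda>i. x * xi i + (1 - x) * w i) \<le> ereal x * crit Phi I N xi + ereal (1 - x) * crit Phi I N w"
      using cc xd wd x unfolding convex_crit_def by blast
    moreover have "(\<lambda>i. x * xi i + (1 - x) * w i) = (\<lambda>i. (1 - x) * w i + x * xi i)" by (auto simp: algebra_simps)
    ultimately have le: "crit Phi I N (\<lambda>i. (1 - x) * w i + x * xi i) \<le> ereal (x * c' + (1 - x) * c)"
      using c c' by simp
    then obtain m where m: "crit Phi I N (\<lambda>i. (1 - x) * w i + x * xi i) = ereal m"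
      using ninf[of "\<lambda>i. (1 - x) * w i + x * xi i"] by (cases "crit Phi I N (\<lambda>i. (1 - x) * w i + x * xi i)") auto
    with le have "m - c \<le> x * (c' - c)" by (simp add: algebra_simps)
    then have "(m - c) / x \<le> c' - c" using x by (simp add: divide_le_eq mult.commute)
    then show "dquot Phi I N w xi x \<le> ereal (c' - c)"
      unfolding dquot_def c m using x by (simp add: ereal_divide)
  qed
  have "ereal L \<le> ereal (c' - c)"
    by (rule tendsto_upperbound[OF L(1) ev trivial_limit_at_right_real])
  with L0 show ?thesis using c c' by simp
qed

theorem theorem2:
  fixes N :: nat and \<nu> \<mu> :: "nat \<Rightarrow> real"
    and I :: "nat \<Rightarrow> real^'p^'p" and Phi :: "real^'p^'p \<Rightarrow> ereal"
    and w :: "nat \<Rightarrow> real"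
  assumes I_sym: "\<forall>i<N. transpose (I i) = I i"
    and I_psd: "\<forall>i<N. \<forall>v. 0 \<le> v \<bullet> (I i *v v)"
    and bounds: "\<forall>i<N. 0 \<le> \<nu> i \<and> \<nu> i < \<mu> i"
    and sum_nu: "(\<Sum>i<N. \<nu> i) \<le> 1"
    and sum_mu: "(\<Sum>i<N. \<mu> i) \<ge> 1"
    and Lam: "in_Lambda Phi I N"
    and w_in: "w \<in> bounded_designs N \<nu> \<mu>"
    and fin: "crit Phi I N w < \<infinity>"
  shows "(\<forall>\<xi>\<in>bounded_designs N \<nu> \<mu>. crit Phi I N w \<le> crit Phi I N \<xi>) \<longleftrightarrow>
    (\<exists>X1 X2 X3. X1 \<union> X2 \<union> X3 = {..<N} \<and> X1 \<inter> X2 = {} \<and> X1 \<inter> X3 = {} \<and> X2 \<inter> X3 = {} \<and>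
       (\<forall>i\<in>X1. w i = \<nu> i) \<and> (\<forall>i\<in>X3. w i = \<mu> i) \<and>
       (X2 = {} \<longrightarrow> (\<forall>i\<in>X3. \<forall>j\<in>X1.
           dir_deriv Phi I N w (dirac i) \<le> dir_deriv Phi I N w (dirac j))) \<and>
       (X2 \<noteq> {} \<longrightarrow> (\<exists>s::real.
           (\<forall>i\<in>X2. \<nu> i < w i \<and> w i < \<mu> i \<and> dir_deriv Phi I N w (dirac i) = s) \<and>
           (\<forall>j\<in>X3. dir_deriv Phi I N w (dirac j) \<le> s) \<and>
           (\<forall>j\<in>X1. s \<le> dir_deriv Phi I N w (dirac j)))))"
  proof
  define D where "D k = dir_deriv Phi I N w (dirac k)" for k
  have wb: "\<forall>i<N. \<nu> i \<le> w i \<and> w i \<le> \<mu> i" using w_in by (simp add: bounded_designs_def)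
  {
    assume opt: "\<forall>\<xi>\<in>bounded_designs N \<nu> \<mu>. crit Phi I N w \<le> crit Phi I N \<xi>"
    define A where "A = {i. i < N \<and> \<nu> i < w i}"
    define B where "B = {i. i < N \<and> w i < \<mu> i}"
    have key: "D a \<le> D b" if "a \<in> A" "b \<in> B" for a b
    proof (cases "a = b")
      case True then show ?thesis by simp
    next
      case False
      have "a < N" "b < N" "\<nu> a < w a" "w b < \<mu> b" using that by (auto simp: A_def B_def)
      then show ?thesis unfolding D_def using False
        by (intro opt_pair[OF bounds Lam w_in fin opt]) auto
    qed
    show "\<exists>X1 X2 X3. X1 \<union> X2 \<union> X3 = {..<N} \<and> X1 \<inter> X2 = {} \<and> X1 \<inter> X3 = {} \<and> X2 \<inter> X3 = {} \<and>
       (\<forall>i\<in>X1. w i = \<nu> i) \<and> (\<forall>i\<in>X3. w i = \<mu> i) \<and>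
       (X2 = {} \<longrightarrow> (\<forall>i\<in>X3. \<forall>j\<in>X1.
           dir_deriv Phi I N w (dirac i) \<le> dir_deriv Phi I N w (dirac j))) \<and>
       (X2 \<noteq> {} \<longrightarrow> (\<exists>s::real.
           (\<forall>i\<in>X2. \<nu> i < w i \<and> w i < \<mu> i \<and> dir_deriv Phi I N w (dirac i) = s) \<and>
           (\<forall>j\<in>X3. dir_deriv Phi I N w (dirac j) \<le> s) \<and>
           (\<forall>j\<in>X1. s \<le> dir_deriv Phi I N w (dirac j))))"
    proof (rule exI[of _ "B - A"], rule exI[of _ "A \<inter> B"], rule exI[of _ "A - B"], intro conjI impI)
      show "B - A \<union> A \<inter> B \<union> (A - B) = {..<N}"
        using bounds by (auto simp: A_def B_def)
      show "\<forall>i\<in>B - A. w i = \<nu> i" using wb by (auto simp: A_def B_def)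
      show "\<forall>i\<in>A - B. w i = \<mu> i" using wb by (auto simp: A_def B_def)
      show "\<forall>i\<in>A - B. \<forall>j\<in>B - A. dir_deriv Phi I N w (dirac i) \<le> dir_deriv Phi I N w (dirac j)"
        using key unfolding D_def by blast
    next
      assume "A \<inter> B \<noteq> {}"
      then obtain i0 where i0: "i0 \<in> A \<inter> B" by blast
      show "\<exists>s::real.
           (\<forall>i\<in>A \<inter> B. \<nu> i < w i \<and> w i < \<mu> i \<and> dir_deriv Phi I N w (dirac i) = s) \<and>
           (\<forall>j\<in>A - B. dir_deriv Phi I N w (dirac j) \<le> s) \<and>
           (\<forall>j\<in>B - A. s \<le> dir_deriv Phi I N w (dirac j))"
      proof (intro exI[of _ "D i0"] conjI ballI)
        fix i assume i: "i \<in> A \<inter> B"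
        show "\<nu> i < w i" "w i < \<mu> i" using i by (auto simp: A_def B_def)
        show "dir_deriv Phi I N w (dirac i) = D i0"
          using key[of i i0] key[of i0 i] i i0 unfolding D_def by force
      next
        fix j assume "j \<in> A - B" then show "dir_deriv Phi I N w (dirac j) \<le> D i0"
          using key[of j i0] i0 unfolding D_def by blast
      next
        fix j assume "j \<in> B - A" then show "D i0 \<le> dir_deriv Phi I N w (dirac j)"
          using key[of i0 j] i0 unfolding D_def by blast
      qed
    qed auto
  }
  {
    assume "\<exists>X1 X2 X3. X1 \<union> X2 \<union> X3 = {..<N} \<and> X1 \<inter> X2 = {} \<and> X1 \<inter> X3 = {} \<and> X2 \<inter> X3 = {} \<and>
       (\<forall>i\<in>X1. w i = \<nu> i) \<and> (\<forall>i\<in>X3. w i = \<mu> i) \<and>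
       (X2 = {} \<longrightarrow> (\<forall>i\<in>X3. \<forall>j\<in>X1.
           dir_deriv Phi I N w (dirac i) \<le> dir_deriv Phi I N w (dirac j))) \<and>
       (X2 \<noteq> {} \<longrightarrow> (\<exists>s::real.
           (\<forall>i\<in>X2. \<nu> i < w i \<and> w i < \<mu> i \<and> dir_deriv Phi I N w (dirac i) = s) \<and>
           (\<forall>j\<in>X3. dir_deriv Phi I N w (dirac j) \<le> s) \<and>
           (\<forall>j\<in>X1. s \<le> dir_deriv Phi I N w (dirac j))))"
    then obtain X1 X2 X3 where X: "X1 \<union> X2 \<union> X3 = {..<N}"
       "\<forall>i\<in>X1. w i = \<nu> i" "\<forall>i\<in>X3. w i = \<mu> i"
       "X2 = {} \<longrightarrow> (\<forall>i\<in>X3. \<forall>j\<in>X1. D i \<le> D j)"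
       "X2 \<noteq> {} \<longrightarrow> (\<exists>s::real. (\<forall>i\<in>X2. \<nu> i < w i \<and> w i < \<mu> i \<and> D i = s) \<and>
           (\<forall>j\<in>X3. D j \<le> s) \<and> (\<forall>j\<in>X1. s \<le> D j))"
      unfolding D_def by blast
    have fX: "finite X1" "finite X3" using X(1) by (metis finite_Un finite_lessThan)+
    obtain s where s: "\<forall>i\<in>X2. D i = s" "\<forall>j\<in>X3. D j \<le> s" "\<forall>j\<in>X1. s \<le> D j"
    proof (cases "X2 = {}")
      case False then show ?thesis using X(5) that by blast
    next
      case True
      note h = X(4)[rule_format, OF True]
      show ?thesis
      proof (cases "X3 = {}")
        case True
        show ?thesis
        proof (cases "X1 = {}")
          case True then show ?thesis using that[of 0] \<open>X3 = {}\<close> \<open>X2 = {}\<close> by blast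
        next
          case False
          show ?thesis using that[of "Min (D ` X1)"] \<open>X3 = {}\<close> \<open>X2 = {}\<close> fX by auto
        qed
      next
        case False
        show ?thesis
        proof (rule that[of "Max (D ` X3)"])
          show "\<forall>j\<in>X1. Max (D ` X3) \<le> D j" using False fX h by (auto simp: Max_le_iff)
        qed (use \<open>X2 = {}\<close> fX False in auto)
      qed
    qed
    show "\<forall>\<xi>\<in>bounded_designs N \<nu> \<mu>. crit Phi I N w \<le> crit Phi I N \<xi>"
    proof
      fix xi assume xi: "xi \<in> bounded_designs N \<nu> \<mu>"
      have xb: "\<forall>i<N. \<nu> i \<le> xi i \<and> xi i \<le> \<mu> i" using xi by (simp add: bounded_designs_def)
      show "crit Phi I N w \<le> crit Phi I N xi"
      proof (rule suff[OF Lam w_in fin xi, of s], intro allI impI)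
        fix k assume k: "k < N"
        then have "k \<in> X1 \<union> X2 \<union> X3" using X(1) by auto
        then show "(xi k - w k) * s \<le> (xi k - w k) * dir_deriv Phi I N w (dirac k)"
        proof (elim UnE)
          assume "k \<in> X1"
          then show ?thesis using X(2) xb s(3) k unfolding D_def by (auto intro: mult_left_mono)
        next
          assume "k \<in> X2"
          then show ?thesis using s(1) unfolding D_def by auto
        next
          assume "k \<in> X3"
          then show ?thesis using X(3) xb s(2) k unfolding D_def by (auto intro: mult_left_mono_neg)
        qed
      qed
    qed
  }
qed

end
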